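(* For every real sequence $u\in\mathbb R^{\mathbb N}$, $$\mathbf K^s_u=\inf_{(h,\beta)\in\Gamma(u)}\ \inf_{k\in\mathcal S(u,h)}\mathfrak F_u(k,h,\beta)=\inf_{(h,\beta)\in\Gamma(u)}\ \inf_{k\in\mathcal S(u,h)}\frac{\ln(h^{-1}_{[0,1]}(u_k))}{\ln\beta},$$ with $\inf\emptyset=+\infty$. Moreover, when $G^{>}_u\neq\emptyset$, both infima are attained (they are minima).
   Context: $\Delta^s_u=\{k\in\mathbb N:\max_{0\le j\le k}u_j>\sup_{j>k}u_j\}$, $\mathbf K^s_u=\inf\Delta^s_u$; $G^{>}_u=\{k:u_k>\limsup_n u_n\}$. $\Omega([0,1])$: functions $h:\mathbb R\to\mathbb R$ whose restriction to $[0,1]$ is strictly increasing and continuous; $h^{-1}_{[0,1]}$ the inverse of that restriction. $\Gamma(u)=\{(h,\beta)\in\Omega([0,1])\times(0,1):u_k\le h(\beta^k)\ \forall k\}$; $\mathcal S(u,h)=\{k:u_k>h(0)\}$. $\mathfrak F_u(k,h,\beta)=\ln(h^{-1}_{[0,1]}(u_k))/\ln\beta$ if $(h,\beta)\in\Gamma(u)$ and $k\in\mathcal S(u,h)$, and $+\infty$ otherwise. *)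

theory Defs
  imports "HOL-Analysis.Analysis" "HOL-Library.Liminf_Limsup"
begin

definition DeltaS :: "(nat \<Rightarrow> real) \<Rightarrow> nat set" where
  "DeltaS u = {k. ereal (MAX j\<in>{..k}. u j) > (SUP j\<in>{k<..}. ereal (u j))}"

definition KS :: "(nat \<Rightarrow> real) \<Rightarrow> ereal" where
  "KS u = (INF k\<in>DeltaS u. ereal (real k))"

definition Gbig :: "(nat \<Rightarrow> real) \<Rightarrow> nat set" where
  "Gbig u = {k. ereal (u k) > limsup (\<lambda>n. ereal (u n))}"

definition Omega01 :: "(real \<Rightarrow> real) set" where
  "Omega01 = {h. strict_mono_on {0..1} h \<and> continuous_on {0..1} h}"

definition inv01 :: "(real \<Rightarrow> real) \<Rightarrow> real \<Rightarrow> real" where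
  "inv01 h = the_inv_into {0..1} h"

definition Gamma :: "(nat \<Rightarrow> real) \<Rightarrow> ((real \<Rightarrow> real) \<times> real) set" where
  "Gamma u = {(h, \<beta>). h \<in> Omega01 \<and> 0 < \<beta> \<and> \<beta> < 1 \<and> (\<forall>k. u k \<le> h (\<beta> ^ k))}"

definition Sset :: "(nat \<Rightarrow> real) \<Rightarrow> (real \<Rightarrow> real) \<Rightarrow> nat set" where
  "Sset u h = {k. u k > h 0}"

definition Fu :: "(nat \<Rightarrow> real) \<Rightarrow> nat \<Rightarrow> (real \<Rightarrow> real) \<Rightarrow> real \<Rightarrow> ereal" where
  "Fu u k h \<beta> = (if (h, \<beta>) \<in> Gamma u \<and> k \<in> Sset u h
      then ereal (ln (inv01 h (u k)) / ln \<beta>) else \<infinity>)"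

end

theory Submission
  imports Defs
begin

lemma L1:
  assumes G: "(h, \<beta>) \<in> Gamma u" and S: "k \<in> Sset u h"
  shows "\<exists>n\<in>DeltaS u. real n \<le> ln (inv01 h (u k)) / ln \<beta>"
proof -
  from G have sm: "strict_mono_on {0..1} h" and co: "continuous_on {0..1} h"
    and b0: "0 < \<beta>" and b1: "\<beta> < 1" and ub: "\<And>j. u j \<le> h (\<beta> ^ j)"
    by (auto simp: Gamma_def Omega01_def)
  from S have hk: "h 0 < u k" by (simp add: Sset_def)
  have bk: "\<beta>^k \<in> {0..1}" using b0 b1 by (simp add: power_le_one)
  have "h (\<beta>^k) \<le> h 1"
  proof (cases "\<beta>^k = 1")
    case False
    hence "\<beta>^k < 1" using bk by auto
    hence "h (\<beta>^k) < h 1" using sm bk unfolding strict_mono_on_def by auto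
    thus ?thesis by simp
  qed simp
  with ub[of k] have "u k \<le> h 1" by linarith
  then obtain x0 where x0: "0 \<le> x0" "x0 \<le> 1" "h x0 = u k"
    using IVT'[of h 0 "u k" 1] co hk by auto
  have inj: "inj_on h {0..1}" using sm strict_mono_on_imp_inj_on by blast
  have inv: "inv01 h (u k) = x0"
    unfolding inv01_def using the_inv_into_f_f[OF inj, of x0] x0 by simp
  have xpos: "0 < x0" using x0 hk by (cases "x0 = 0") auto
  define t where "t = ln x0 / ln \<beta>"
  have lnb: "ln \<beta> < 0" using b0 b1 by simp
  have lnx: "ln x0 \<le> 0" using xpos x0 by simp
  have t0: "0 \<le> t" unfolding t_def using lnb lnx by (simp add: divide_nonpos_neg)
  define n where "n = nat \<lfloor>t\<rfloor>"
  have nt: "real n \<le> t" "t < real n + 1" unfolding n_def using t0 by linarith+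
  have "(real n + 1) * ln \<beta> < t * ln \<beta>" using nt lnb by (simp add: mult_strict_right_mono_neg)
  also have "t * ln \<beta> = ln x0" unfolding t_def using lnb by simp
  moreover have "ln (\<beta>^(n+1)) = (real n + 1) * ln \<beta>" using b0 by (simp only: ln_realpow) simp
  ultimately have "ln (\<beta>^(n+1)) < ln x0" by linarith
  hence bx: "\<beta>^(n+1) < x0" using b0 xpos by simp
  have hb: "h (\<beta>^(n+1)) < u k"
    using sm bx x0 b0 b1 unfolding strict_mono_on_def
    by (metis atLeastAtMost_iff less_eq_real_def power_le_one zero_le_power)
  have tail: "u j \<le> h (\<beta>^(n+1))" if "j > n" for j
  proof -
    have "\<beta>^j \<le> \<beta>^(n+1)" using that b0 b1 by (intro power_decreasing) auto
    moreover have "\<beta>^(n+1) \<in> {0..1}" "\<beta>^j \<in> {0..1}" using b0 b1 power_le_one[of \<beta> "n+1"] power_le_one[of \<beta> j] by auto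
    ultimately have "h (\<beta>^j) \<le> h (\<beta>^(n+1))"
    proof (cases "\<beta>^j = \<beta>^(n+1)")
      case False
      assume "\<beta>^j \<le> \<beta>^(n+1)" "\<beta>^(n+1) \<in> {0..1}" "\<beta>^j \<in> {0..1}"
      hence "\<beta>^j < \<beta>^(n+1)" using False by simp
      hence "h (\<beta>^j) < h (\<beta>^(n+1))" using sm \<open>\<beta>^(n+1) \<in> {0..1}\<close> \<open>\<beta>^j \<in> {0..1}\<close>
        unfolding strict_mono_on_def by blast
      thus ?thesis by simp
    qed simp
    thus ?thesis using ub[of j] by linarith
  qed
  have kn: "k \<le> n"
  proof (rule ccontr)
    assume "\<not> k \<le> n" hence "u k \<le> h (\<beta>^(n+1))" using tail by simp
    thus False using hb by simp
  qed
  have "(SUP j\<in>{n<..}. ereal (u j)) \<le> ereal (h (\<beta>^(n+1)))"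
    by (rule SUP_least) (use tail in auto)
  also have "\<dots> < ereal (u k)" using hb by simp
  also have "u k \<le> (MAX j\<in>{..n}. u j)" using kn by (intro Max_ge) auto
  finally have "n \<in> DeltaS u" unfolding DeltaS_def by simp
  thus ?thesis using nt inv t_def by auto
qed

lemma L2:
  assumes n: "n \<in> DeltaS u"
  shows "\<exists>h \<beta> k. (h, \<beta>) \<in> Gamma u \<and> k \<in> Sset u h \<and> ln (inv01 h (u k)) / ln \<beta> = real n"
proof -
  define M where "M = (MAX j\<in>{..n}. u j)"
  obtain k where k: "k \<le> n" "u k = M"
    unfolding M_def using Max_in[of "u ` {..n}"] by fastforce
  have Mge: "u j \<le> M" if "j \<le> n" for j unfolding M_def using that by (intro Max_ge) auto
  from n have "(SUP j\<in>{n<..}. ereal (u j)) < ereal M" unfolding DeltaS_def M_def by simp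
  then obtain c where c: "(SUP j\<in>{n<..}. ereal (u j)) < ereal c" "c < M"
    using ereal_dense2 by fastforce
  have uc: "u j < c" if "j > n" for j
  proof -
    have "ereal (u j) \<le> (SUP j\<in>{n<..}. ereal (u j))" using that by (intro SUP_upper) auto
    hence "ereal (u j) < ereal c" using c(1) by (rule le_less_trans)
    thus ?thesis by simp
  qed
  define \<beta> :: real where "\<beta> = 1/2"
  define d where "d = (M - c) / \<beta>^n"
  define h where "h = (\<lambda>x. c + d * x)"
  have dpos: "d > 0" unfolding d_def \<beta>_def using c by simp
  have hn: "h (\<beta>^n) = M" unfolding h_def d_def \<beta>_def by simp
  have sm: "strict_mono_on {0..1} h" unfolding strict_mono_on_def h_def using dpos by simp
  have co: "continuous_on {0..1} h" unfolding h_def by (intro continuous_intros)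
  have ub: "u j \<le> h (\<beta>^j)" for j
  proof (cases "j \<le> n")
    case True
    have "\<beta>^n \<le> \<beta>^j" unfolding \<beta>_def using True by (intro power_decreasing) auto
    hence "d * \<beta>^n \<le> d * \<beta>^j" using dpos by (simp add: mult_left_mono)
    hence "M \<le> h (\<beta>^j)" using hn unfolding h_def by linarith
    thus ?thesis using Mge True by fastforce
  next
    case False
    have "c \<le> h (\<beta>^j)" unfolding h_def \<beta>_def using dpos by simp
    thus ?thesis using uc[of j] False by simp
  qed
  have G: "(h, \<beta>) \<in> Gamma u" unfolding Gamma_def Omega01_def using sm co ub by (simp add: \<beta>_def)
  have S: "k \<in> Sset u h" unfolding Sset_def h_def using k c by simp
  have inj: "inj_on h {0..1}" using sm strict_mono_on_imp_inj_on by blast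
  have inv: "inv01 h (u k) = \<beta>^n"
    unfolding inv01_def k(2) hn[symmetric] by (rule the_inv_into_f_f[OF inj]) (auto simp: \<beta>_def power_le_one)
  have "ln (inv01 h (u k)) / ln \<beta> = real n" unfolding inv by (simp add: ln_realpow \<beta>_def)
  thus ?thesis using G S by blast
qed

lemma L3:
  assumes "Gbig u \<noteq> {}" shows "DeltaS u \<noteq> {}"
proof -
  from assms obtain k0 where k0: "ereal (u k0) > limsup (\<lambda>n. ereal (u n))"
    unfolding Gbig_def by auto
  then obtain c where c: "limsup (\<lambda>n. ereal (u n)) < ereal c" "c < u k0"
    using ereal_dense2 by fastforce
  have "eventually (\<lambda>n. ereal (u n) < ereal c) sequentially"
    using Limsup_lessD[OF c(1)] by simp
  then obtain N where N: "\<And>j. j \<ge> N \<Longrightarrow> u j < c" by (auto simp: eventually_sequentially)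
  define n where "n = max N k0"
  have "(SUP j\<in>{n<..}. ereal (u j)) \<le> ereal c"
    by (rule SUP_least) (use N n_def in \<open>auto intro: less_imp_le\<close>)
  also have "\<dots> < ereal (u k0)" using c by simp
  also have "u k0 \<le> (MAX j\<in>{..n}. u j)" unfolding n_def by (intro Max_ge) auto
  finally have "n \<in> DeltaS u" unfolding DeltaS_def by simp
  thus ?thesis by auto
qed

theorem mainTheorem8:
  fixes u :: "nat \<Rightarrow> real"
  shows "KS u = (INF p\<in>Gamma u. INF k\<in>Sset u (fst p). Fu u k (fst p) (snd p))
     \<and> KS u = (INF p\<in>Gamma u. INF k\<in>Sset u (fst p).
                 ereal (ln (inv01 (fst p) (u k)) / ln (snd p)))
     \<and> (Gbig u \<noteq> {} \<longrightarrow>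
          (\<exists>h \<beta> k. (h, \<beta>) \<in> Gamma u \<and> k \<in> Sset u h \<and> Fu u k h \<beta> = KS u))"
proof -
  have eq: "(INF p\<in>Gamma u. INF k\<in>Sset u (fst p). Fu u k (fst p) (snd p))
     = (INF p\<in>Gamma u. INF k\<in>Sset u (fst p). ereal (ln (inv01 (fst p) (u k)) / ln (snd p)))"
    by (intro INF_cong refl) (auto simp: Fu_def)
  have A: "KS u = (INF p\<in>Gamma u. INF k\<in>Sset u (fst p). ereal (ln (inv01 (fst p) (u k)) / ln (snd p)))"
  proof (rule antisym)
    show "KS u \<le> (INF p\<in>Gamma u. INF k\<in>Sset u (fst p). ereal (ln (inv01 (fst p) (u k)) / ln (snd p)))"
    proof (intro INF_greatest)
      fix p k assume p: "p \<in> Gamma u" and k: "k \<in> Sset u (fst p)"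
      obtain h \<beta> where hb: "p = (h, \<beta>)" by (cases p)
      from L1[of h \<beta> u k] p k hb obtain n where "n \<in> DeltaS u" "real n \<le> ln (inv01 h (u k)) / ln \<beta>"
        by auto
      hence "KS u \<le> ereal (real n)" "ereal (real n) \<le> ereal (ln (inv01 h (u k)) / ln \<beta>)"
        unfolding KS_def by (auto intro: INF_lower)
      thus "KS u \<le> ereal (ln (inv01 (fst p) (u k)) / ln (snd p))" using hb order.trans by fastforce
    qed
  next
    show "(INF p\<in>Gamma u. INF k\<in>Sset u (fst p). ereal (ln (inv01 (fst p) (u k)) / ln (snd p))) \<le> KS u"
      unfolding KS_def
    proof (intro INF_greatest)
      fix n assume "n \<in> DeltaS u"
      from L2[OF this] obtain h \<beta> k where G: "(h, \<beta>) \<in> Gamma u" "k \<in> Sset u h"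
        "ln (inv01 h (u k)) / ln \<beta> = real n" by blast
      have "(INF p\<in>Gamma u. INF k\<in>Sset u (fst p). ereal (ln (inv01 (fst p) (u k)) / ln (snd p)))
          \<le> (INF k\<in>Sset u h. ereal (ln (inv01 h (u k)) / ln \<beta>))"
        using INF_lower[OF G(1), of "\<lambda>p. INF k\<in>Sset u (fst p). ereal (ln (inv01 (fst p) (u k)) / ln (snd p))"]
        by simp
      also have "\<dots> \<le> ereal (ln (inv01 h (u k)) / ln \<beta>)" using G(2) by (rule INF_lower)
      finally show "(INF p\<in>Gamma u. INF k\<in>Sset u (fst p). ereal (ln (inv01 (fst p) (u k)) / ln (snd p)))
          \<le> ereal (real n)" using G(3) by simp
    qed
  qed
  have C: "Gbig u \<noteq> {} \<longrightarrow> (\<exists>h \<beta> k. (h, \<beta>) \<in> Gamma u \<and> k \<in> Sset u h \<and> Fu u k h \<beta> = KS u)"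
  proof
    assume "Gbig u \<noteq> {}"
    hence ne: "DeltaS u \<noteq> {}" by (rule L3)
    define n where "n = (LEAST n. n \<in> DeltaS u)"
    have nD: "n \<in> DeltaS u" unfolding n_def using ne by (auto intro: LeastI)
    have "KS u = ereal (real n)" unfolding KS_def
    proof (rule antisym)
      show "(INF k\<in>DeltaS u. ereal (real k)) \<le> ereal (real n)" using nD by (rule INF_lower)
      show "ereal (real n) \<le> (INF k\<in>DeltaS u. ereal (real k))"
        by (rule INF_greatest) (auto simp: n_def intro: Least_le)
    qed
    moreover from L2[OF nD] obtain h \<beta> k where "(h, \<beta>) \<in> Gamma u" "k \<in> Sset u h"
      "ln (inv01 h (u k)) / ln \<beta> = real n" by blast
    ultimately show "\<exists>h \<beta> k. (h, \<beta>) \<in> Gamma u \<and> k \<in> Sset u h \<and> Fu u k h \<beta> = KS u"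
      by (auto simp: Fu_def)
  qed
  show ?thesis using A eq C by simp
qed

end
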